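(* Let $L$ be a linear forest with $k$ vertices. If $q\ge k+1$ and $r\ge k-1$ are integers, then $s(P_{q+r},L)=s(C_q+P_r,L)$.
   Context: A linear forest is a disjoint union of paths. $P_j$ and $C_j$ are the path and cycle with $j$ vertices, $P_0$ is the graph with no vertices, and $+$ denotes disjoint union. For graphs $G,H$, $s(G,H)$ is the number of vertex subsets $X\subseteq V(G)$ such that $G[X]$ is isomorphic to $H$. *)

theory Defs
  imports Main
begin

text \<open>A (simple) graph is a pair (V, E): a vertex set and a set of edges, each
  edge being a 2-element subset of V. Isomorphism and induced subgraphs only
  look at pairs of vertices.\<close>

type_synonym 'a graph = "'a set \<times> 'a set set"

definition verts :: "'a graph \<Rightarrow> 'a set" where "verts G = fst G"
definition edges :: "'a graph \<Rightarrow> 'a set set" where "edges G = snd G"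

definition induced :: "'a graph \<Rightarrow> 'a set \<Rightarrow> 'a graph" where
  "induced G X = (X, {e \<in> edges G. e \<subseteq> X})"

definition graph_iso :: "'a graph \<Rightarrow> 'b graph \<Rightarrow> bool" where
  "graph_iso G H \<longleftrightarrow> (\<exists>f. bij_betw f (verts G) (verts H) \<and>
     (\<forall>u\<in>verts G. \<forall>v\<in>verts G. {u, v} \<in> edges G \<longleftrightarrow> {f u, f v} \<in> edges H))"

definition s_count :: "'a graph \<Rightarrow> 'b graph \<Rightarrow> nat" where
  "s_count G H = card {X. X \<subseteq> verts G \<and> graph_iso (induced G X) H}"

definition path_graph :: "nat \<Rightarrow> nat graph" where
  "path_graph j = ({0..<j}, {{i, Suc i} | i. Suc i < j})"

definition cycle_graph :: "nat \<Rightarrow> nat graph" where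
  "cycle_graph j = ({0..<j}, {{i, (Suc i) mod j} | i. i < j \<and> i \<noteq> (Suc i) mod j})"

definition disj_union :: "'a graph \<Rightarrow> 'b graph \<Rightarrow> ('a + 'b) graph" where
  "disj_union G H = (Inl ` verts G \<union> Inr ` verts H,
                     (\<lambda>e. Inl ` e) ` edges G \<union> (\<lambda>e. Inr ` e) ` edges H)"

definition paths_union :: "nat list \<Rightarrow> (nat \<times> nat) graph" where
  "paths_union ns = ({(i, j). i < length ns \<and> j < ns ! i},
                     {{(i, j), (i, Suc j)} | i j. i < length ns \<and> Suc j < ns ! i})"

definition linear_forest :: "'a graph \<Rightarrow> bool" where
  "linear_forest L \<longleftrightarrow> (\<exists>ns. graph_iso L (paths_union ns))"

end

theory Submission
  imports Defs
begin


lemma du_edges: "edges (disj_union G H) = (\<lambda>e. Inl ` e) ` edges G \<union> (\<lambda>e. Inr ` e) ` edges H"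
  by (simp add: disj_union_def edges_def)

lemma du_ll: "{Inl a, Inl b} \<in> edges (disj_union G H) \<longleftrightarrow> {a, b} \<in> edges G"
proof -
  have e: "{Inl a, Inl b} = Inl ` e \<longleftrightarrow> e = {a,b}" for e :: "'a set"
    by (metis image_empty image_insert inj_Inl inj_image_eq_iff)
  have n: "{Inl a, Inl b} \<noteq> Inr ` e" for e :: "'b set" by auto
  show ?thesis unfolding du_edges using e n by (metis (no_types, lifting) UnE UnI1 imageE image_eqI)
qed

lemma du_rr: "{Inr a, Inr b} \<in> edges (disj_union G H) \<longleftrightarrow> {a, b} \<in> edges H"
proof -
  have e: "{Inr a, Inr b} = Inr ` e \<longleftrightarrow> e = {a,b}" for e :: "'b set"
    by (metis image_empty image_insert inj_Inr inj_image_eq_iff)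
  have n: "{Inr a, Inr b} \<noteq> Inl ` e" for e :: "'a set" by auto
  show ?thesis unfolding du_edges using e n by (metis (no_types, lifting) UnE UnI2 imageE image_eqI)
qed

lemma du_lr: "{Inl a, Inr b} \<notin> edges (disj_union G H)"
  unfolding du_edges by auto

lemma du_rl: "{Inr a, Inl b} \<notin> edges (disj_union G H)"
  unfolding du_edges by auto



lemma iso_sym: "graph_iso G H \<Longrightarrow> graph_iso H G"
  unfolding graph_iso_def
proof (elim exE conjE)
  fix f assume b: "bij_betw f (verts G) (verts H)" and e: "\<forall>u\<in>verts G. \<forall>v\<in>verts G. ({u, v} \<in> edges G) = ({f u, f v} \<in> edges H)"
  let ?g = "the_inv_into (verts G) f"
  have bg: "bij_betw ?g (verts H) (verts G)" by (rule bij_betw_the_inv_into[OF b])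
  have fg: "\<And>x. x \<in> verts H \<Longrightarrow> f (?g x) = x" using b f_the_inv_into_f_bij_betw by metis
  show "\<exists>f. bij_betw f (verts H) (verts G) \<and> (\<forall>u\<in>verts H. \<forall>v\<in>verts H. ({u, v} \<in> edges H) = ({f u, f v} \<in> edges G))"
  proof (intro exI conjI ballI)
    show "bij_betw ?g (verts H) (verts G)" by fact
    fix u v assume u: "u \<in> verts H" and v: "v \<in> verts H"
    have "?g u \<in> verts G" "?g v \<in> verts G" using bg u v bij_betwE by blast+
    then show "({u, v} \<in> edges H) = ({?g u, ?g v} \<in> edges G)" using e fg u v by metis
  qed
qed

lemma iso_trans: "graph_iso G H \<Longrightarrow> graph_iso H K \<Longrightarrow> graph_iso G K"
  unfolding graph_iso_def
proof (elim exE conjE)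
  fix f g assume bf: "bij_betw f (verts G) (verts H)" and ef: "\<forall>u\<in>verts G. \<forall>v\<in>verts G. ({u, v} \<in> edges G) = ({f u, f v} \<in> edges H)"
    and bg: "bij_betw g (verts H) (verts K)" and eg: "\<forall>u\<in>verts H. \<forall>v\<in>verts H. ({u, v} \<in> edges H) = ({g u, g v} \<in> edges K)"
  show "\<exists>h. bij_betw h (verts G) (verts K) \<and> (\<forall>u\<in>verts G. \<forall>v\<in>verts G. ({u, v} \<in> edges G) = ({h u, h v} \<in> edges K))"
  proof (intro exI conjI ballI)
    show "bij_betw (g \<circ> f) (verts G) (verts K)" using bf bg by (rule bij_betw_trans)
    fix u v assume u: "u \<in> verts G" and v: "v \<in> verts G"
    have "f u \<in> verts H" "f v \<in> verts H" using bf u v bij_betwE by blast+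
    then show "({u, v} \<in> edges G) = ({(g \<circ> f) u, (g \<circ> f) v} \<in> edges K)" using ef eg u v by simp
  qed
qed

lemma iso_card: "graph_iso G H \<Longrightarrow> card (verts G) = card (verts H)"
  unfolding graph_iso_def using bij_betw_same_card by blast

lemma induced_verts[simp]: "verts (induced G X) = X"
  by (simp add: induced_def verts_def)
lemma induced_edges[simp]: "edges (induced G X) = {e \<in> edges G. e \<subseteq> X}"
  by (simp add: induced_def edges_def)

lemma verts_path: "verts (path_graph n) = {0..<n}" by (simp add: path_graph_def verts_def)
lemma verts_du: "verts (disj_union (cycle_graph q) (path_graph r)) = Inl ` {0..<q} \<union> Inr ` {0..<r}"
  by (simp add: disj_union_def verts_def cycle_graph_def path_graph_def)



lemma modlem: fixes p q d :: nat assumes "p < q" "d < q" shows "((p + d) mod q + q - p) mod q = d"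
proof (cases "p + d < q")
  case True
  then have "(p + d) mod q = p + d" by simp
  then have "(p + d) mod q + q - p = d + q" by simp
  then show ?thesis using assms by simp
next
  case False
  then have "(p + d) mod q = p + d - q" using assms by (simp add: le_mod_geq)
  then show ?thesis using False assms by simp
qed

lemma modlem2: fixes p q a :: nat assumes "p < q" "a < q" shows "(p + (a + q - p) mod q) mod q = a"
proof (cases "a < p")
  case True
  then have "a + q - p < q" using assms by simp
  then have "(a + q - p) mod q = a + q - p" by simp
  then show ?thesis using assms True by simp
next
  case False
  then have "(a + q - p) mod q = a - p" using assms by (simp add: le_mod_geq)
  then show ?thesis using assms False by simp
qed



definition th :: "nat \<Rightarrow> nat \<Rightarrow> nat \<Rightarrow> nat + nat" where
  "th q p i = (if i < p then Inr i else if i < p + q then Inl (i mod q) else Inr (i - q))"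

definition thi :: "nat \<Rightarrow> nat \<Rightarrow> nat + nat \<Rightarrow> nat" where
  "thi q p y = (case y of Inl a \<Rightarrow> p + (a + q - p) mod q | Inr b \<Rightarrow> if b < p then b else b + q)"

lemma window_mod_inj:
  fixes p x q y :: nat
  assumes "p \<le> x" "x < p + q" "p \<le> y" "y < p + q" "x mod q = y mod q"
  shows "x = y"
proof (rule ccontr)
  assume ne: "x \<noteq> y"
  { fix x y :: nat assume "p \<le> x" "y < p + q" "x < y" "x mod q = y mod q"
    then have "q dvd (y - x)" by (metis less_imp_le mod_eq_dvd_iff_nat)
    moreover have "0 < y - x" "y - x < q" using \<open>p \<le> x\<close> \<open>y < p + q\<close> \<open>x < y\<close> by auto
    ultimately have False using nat_dvd_not_less by blast }
  then show False using assms ne by (metis linorder_neqE_nat)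
qed

lemma th_inj: "inj (th q p)"
proof (rule injI)
  fix x y assume "th q p x = th q p y"
  then show "x = y" unfolding th_def using window_mod_inj[of p x q y]
    by (auto split: if_splits)
qed

lemma thi_th: assumes "p < q" shows "thi q p (th q p i) = i"
proof (cases "i < p")
  case True then show ?thesis by (simp add: th_def thi_def)
next
  case False
  show ?thesis
  proof (cases "i < p + q")
    case True
    then obtain d where d: "i = p + d" "d < q" using False by (metis add_less_cancel_left le_Suc_ex not_less)
    then show ?thesis using modlem[OF assms d(2)] False True by (simp add: th_def thi_def)
  next
    case False
    then show ?thesis using \<open>\<not> i < p\<close> by (simp add: th_def thi_def)
  qed
qed

lemma th_thi_l: assumes "p < q" "a < q" shows "th q p (thi q p (Inl a)) = Inl a"
proof -
  have "(a + q - p) mod q < q" using assms by simp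
  then show ?thesis using modlem2[OF assms] by (simp add: th_def thi_def)
qed

lemma th_thi_r: "th q p (thi q p (Inr b)) = Inr b"
  by (simp add: th_def thi_def)

lemma thi_th_img: assumes "p < q" shows "thi q p ` th q p ` X = X"
  using thi_th[OF assms] by (simp add: image_comp)

lemma th_img_sub: assumes "p \<le> r" "X \<subseteq> {0..<q+r}"
  shows "th q p ` X \<subseteq> Inl ` {0..<q} \<union> Inr ` {0..<r}"
proof
  fix y assume "y \<in> th q p ` X"
  then obtain i where i: "i \<in> X" "y = th q p i" by auto
  have "i < q + r" using i assms by auto
  then show "y \<in> Inl ` {0..<q} \<union> Inr ` {0..<r}" using i assms
    unfolding th_def by (auto split: if_splits)
qed

lemma th_thi_img: assumes "p < q" "Y \<subseteq> Inl ` {0..<q} \<union> Inr ` {0..<r}"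
  shows "th q p ` thi q p ` Y = Y"
proof -
  have "th q p (thi q p y) = y" if "y \<in> Y" for y
    using that assms th_thi_l th_thi_r by (cases y) auto
  then show ?thesis by (simp add: image_comp)
qed

lemma thi_img_sub: assumes "p < q" "p \<le> r" "Y \<subseteq> Inl ` {0..<q} \<union> Inr ` {0..<r}"
  shows "thi q p ` Y \<subseteq> {0..<q+r}"
proof
  fix i assume "i \<in> thi q p ` Y"
  then obtain y where y: "y \<in> Y" "i = thi q p y" by auto
  show "i \<in> {0..<q+r}"
  proof (cases y)
    case (Inl a)
    have "(a + q - p) mod q < q" using assms by simp
    then have "i < p + q" using Inl y by (simp add: thi_def)
    then show ?thesis using assms by simp
  next
    case (Inr b)
    then have "b < r" using y assms by auto
    then show ?thesis using Inr y by (auto simp: thi_def)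
  qed
qed



definition val1 :: "nat \<Rightarrow> nat set \<Rightarrow> nat \<Rightarrow> bool" where
  "val1 q X p \<longleftrightarrow> (0 < p \<longrightarrow> \<not> (p - 1 \<in> X \<and> p \<in> X)) \<and> \<not> (p + q - 1 \<in> X \<and> p + q \<in> X)
     \<and> \<not> (p \<in> X \<and> p + q - 1 \<in> X) \<and> (0 < p \<longrightarrow> \<not> (p - 1 \<in> X \<and> p + q \<in> X))"

definition val2 :: "nat \<Rightarrow> (nat + nat) set \<Rightarrow> nat \<Rightarrow> bool" where
  "val2 q Y p \<longleftrightarrow> (0 < p \<longrightarrow> \<not> (Inr (p - 1) \<in> Y \<and> Inl (p mod q) \<in> Y))
     \<and> \<not> (Inl ((p + q - 1) mod q) \<in> Y \<and> Inr p \<in> Y)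
     \<and> \<not> (Inl (p mod q) \<in> Y \<and> Inl ((p + q - 1) mod q) \<in> Y)
     \<and> (0 < p \<longrightarrow> \<not> (Inr (p - 1) \<in> Y \<and> Inr p \<in> Y))"

lemma th_mem: "th q p i \<in> th q p ` X \<longleftrightarrow> i \<in> X"
  using th_inj by (simp add: inj_image_mem_iff)

lemma val_consistent:
  assumes "p' \<le> p0" "p0 < q"
  shows "val2 q (th q p0 ` X) p' \<longleftrightarrow> val1 q X p'"
proof -
  have q1: "q \<ge> 1" using assms by simp
  have e1: "0 < p' \<Longrightarrow> Inr (p' - 1) = th q p0 (p' - 1)" using assms by (simp add: th_def)
  have "\<not> p' + q - 1 < p0" "p' + q - 1 < p0 + q" using assms by linarith+
  then have e2: "Inl ((p' + q - 1) mod q) = th q p0 (p' + q - 1)" by (simp add: th_def)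
  show ?thesis
  proof (cases "p' < p0")
    case True
    have e3: "Inr p' = th q p0 p'" using True by (simp add: th_def)
    have e4: "Inl (p' mod q) = th q p0 (p' + q)" using True assms by (simp add: th_def)
    show ?thesis unfolding val1_def val2_def using e1 e2 e3 e4 th_mem by metis
  next
    case False
    then have pp: "p' = p0" using assms by simp
    have e3: "Inr p' = th q p0 (p' + q)" using pp by (simp add: th_def)
    have e4: "Inl (p' mod q) = th q p0 p'" using pp assms by (simp add: th_def)
    show ?thesis unfolding val1_def val2_def using e1 e2 e3 e4 th_mem by metis
  qed
qed



lemma val1_suff1: "i \<notin> X \<Longrightarrow> i + q \<notin> X \<Longrightarrow> val1 q X i"
  unfolding val1_def by auto

lemma val1_suff0: "q - 1 \<notin> X \<Longrightarrow> val1 q X 0"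
  unfolding val1_def by auto

lemma val1_exists:
  assumes "finite X" "card X \<le> k" "k + 1 \<le> q" "k \<le> r + 1"
  shows "\<exists>p \<le> min (q - 1) r. val1 q X p"
proof (rule ccontr)
  assume H: "\<not> ?thesis"
  define M where "M = min (q - 1) r"
  have a: "i \<in> X \<or> i + q \<in> X" if "i \<le> M" for i
    using H val1_suff1 that M_def by blast
  have b: "q - 1 \<in> X" using H val1_suff0 by blast
  define f where "f i = (if i \<in> X then i else i + q)" for i
  have Mq: "M < q" using M_def assms by simp
  have inj: "inj_on f {0..M}"
  proof (rule inj_onI)
    fix x y assume "x \<in> {0..M}" "y \<in> {0..M}" "f x = f y"
    then show "x = y" using Mq unfolding f_def by (auto split: if_splits)
  qed
  have sub: "f ` {0..M} \<subseteq> X"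
  proof (rule image_subsetI)
    fix i assume "i \<in> {0..M}"
    then have "i \<in> X \<or> i + q \<in> X" using a by simp
    then show "f i \<in> X" unfolding f_def by auto
  qed
  have c1: "card (f ` {0..M}) = M + 1" using card_image[OF inj] by simp
  show False
  proof (cases "q - 1 \<le> r")
    case True
    then have "M = q - 1" using M_def by simp
    then have "card X \<ge> q" using c1 card_mono[OF assms(1) sub] assms by simp
    then show False using assms by simp
  next
    case False
    then have MR: "M = r" using M_def by simp
    have "q - 1 \<notin> f ` {0..M}" using False MR unfolding f_def by auto
    then have "card (insert (q - 1) (f ` {0..M})) = M + 2" using c1 by simp
    moreover have "insert (q - 1) (f ` {0..M}) \<subseteq> X" using sub b by simp
    ultimately have "card X \<ge> r + 2" using card_mono[OF assms(1)] MR by metis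
    then show False using assms by simp
  qed
qed

lemma bb:
  fixes p q u v :: nat
  assumes "p \<le> u" "u < p + q" "p \<le> v" "v < p + q"
    "\<not> (u = p \<and> v = p + q - 1)" "\<not> (v = p \<and> u = p + q - 1)"
  shows "(Suc u = v \<or> Suc v = u) \<longleftrightarrow> (u mod q \<noteq> v mod q \<and> (v mod q = Suc (u mod q) mod q \<or> u mod q = Suc (v mod q) mod q))"
proof -
  have one: "v mod q = Suc u mod q \<longleftrightarrow> Suc u = v" if "p \<le> u" "u < p + q" "p \<le> v" "v < p + q"
    "\<not> (v = p \<and> u = p + q - 1)" for u v
  proof
    assume h: "v mod q = Suc u mod q"
    show "Suc u = v"
    proof (cases "Suc u < p + q")
      case True then show ?thesis using window_mod_inj[of p v q "Suc u"] h that by simp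
    next
      case False
      then have su: "Suc u = p + q" using that by simp
      then have "v mod q = p mod q" using h by simp
      then have "v = p" using window_mod_inj[of p v q p] that by simp
      then show ?thesis using su that by simp
    qed
  qed auto
  have neq: "u mod q \<noteq> v mod q \<longleftrightarrow> u \<noteq> v" using window_mod_inj[of p u q v] assms by auto
  have r1: "Suc (u mod q) mod q = Suc u mod q" "Suc (v mod q) mod q = Suc v mod q" by (simp_all add: mod_Suc_eq)
  have o1: "v mod q = Suc u mod q \<longleftrightarrow> Suc u = v" using one[of u v] assms by blast
  have o2: "u mod q = Suc v mod q \<longleftrightarrow> Suc v = u" using one[of v u] assms by blast
  show ?thesis unfolding r1 o1 o2 neq by auto
qed



lemma path_edge: "{u, v} \<in> edges (path_graph n) \<longleftrightarrow> (Suc u = v \<or> Suc v = u) \<and> u < n \<and> v < n"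
  unfolding edges_def path_graph_def by (auto simp: doubleton_eq_iff)

lemma cycle_edge: "{a, b} \<in> edges (cycle_graph q) \<longleftrightarrow> a < q \<and> b < q \<and> a \<noteq> b \<and> (b = Suc a mod q \<or> a = Suc b mod q)"
  unfolding edges_def cycle_graph_def by (auto simp: doubleton_eq_iff)

lemma adj:
  assumes pr: "p \<le> r" and pq: "p < q" and V: "val1 q X p" and XS: "X \<subseteq> {0..<q+r}" and u: "u \<in> X" and v: "v \<in> X"
  shows "{u,v} \<in> edges (path_graph (q+r)) \<longleftrightarrow> {th q p u, th q p v} \<in> edges (disj_union (cycle_graph q) (path_graph r))"
proof -
  have uq: "u < q + r" "v < q + r" using XS u v by auto
  have c1: "\<not> (p - 1 \<in> X \<and> p \<in> X)" if "0 < p" using V that unfolding val1_def by blast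
  have c2: "\<not> (p + q - 1 \<in> X \<and> p + q \<in> X)" using V unfolding val1_def by blast
  have c3: "\<not> (p \<in> X \<and> p + q - 1 \<in> X)" using V unfolding val1_def by blast
  have c4: "\<not> (p - 1 \<in> X \<and> p + q \<in> X)" if "0 < p" using V that unfolding val1_def by blast
  consider (L) "u < p" | (B) "p \<le> u \<and> u < p + q" | (R) "p + q \<le> u" by linarith
  then show ?thesis
  proof cases
    case L
    consider (L') "v < p" | (B') "p \<le> v \<and> v < p + q" | (R') "p + q \<le> v" by linarith
    then show ?thesis
    proof cases
      case L' then show ?thesis using L pr by (simp add: th_def du_rr path_edge)
    next
      case B'
      have "\<not> (Suc u = v)"
      proof
        assume "Suc u = v"
        then have "v = p" "u = p - 1" "0 < p" using L B' by auto
        then show False using c1 u v by auto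
      qed
      then show ?thesis using L B' by (auto simp: th_def du_rl path_edge)
    next
      case R'
      have "Suc (v - q) \<noteq> u" using R' L by auto
      moreover have "Suc u \<noteq> v - q"
      proof
        assume "Suc u = v - q"
        then have "v = p + q" "u = p - 1" "0 < p" using L R' by auto
        then show False using c4 u v by auto
      qed
      ultimately show ?thesis using L R' pq by (auto simp: th_def du_rr path_edge)
    qed
  next
    case B
    consider (L') "v < p" | (B') "p \<le> v \<and> v < p + q" | (R') "p + q \<le> v" by linarith
    then show ?thesis
    proof cases
      case L'
      have "\<not> (Suc v = u)"
      proof
        assume "Suc v = u"
        then have "u = p" "v = p - 1" "0 < p" using L' B by auto
        then show False using c1 u v by auto
      qed
      then show ?thesis using L' B by (auto simp: th_def du_lr path_edge)
    next
      case B'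
      have n1: "\<not> (u = p \<and> v = p + q - 1)" "\<not> (v = p \<and> u = p + q - 1)" using c3 u v by auto
      have "(Suc u = v \<or> Suc v = u) \<longleftrightarrow> {u mod q, v mod q} \<in> edges (cycle_graph q)"
        using bb[of p u q v] B B' n1 pq by (simp add: cycle_edge)
      then show ?thesis using B B' uq by (simp add: th_def du_ll path_edge)
    next
      case R'
      have "\<not> (Suc u = v)"
      proof
        assume "Suc u = v"
        then have "v = p + q" "u = p + q - 1" using R' B by auto
        then show False using c2 u v by auto
      qed
      then show ?thesis using R' B by (auto simp: th_def du_lr path_edge)
    qed
  next
    case R
    consider (L') "v < p" | (B') "p \<le> v \<and> v < p + q" | (R') "p + q \<le> v" by linarith
    then show ?thesis
    proof cases
      case L'
      have "Suc (u - q) \<noteq> v" using R L' by auto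
      moreover have "Suc v \<noteq> u - q"
      proof
        assume "Suc v = u - q"
        then have "u = p + q" "v = p - 1" "0 < p" using L' R by auto
        then show False using c4 u v by auto
      qed
      ultimately show ?thesis using R L' pq by (auto simp: th_def du_rr path_edge)
    next
      case B'
      have "\<not> (Suc v = u)"
      proof
        assume "Suc v = u"
        then have "u = p + q" "v = p + q - 1" using R B' by auto
        then show False using c2 u v by auto
      qed
      then show ?thesis using R B' by (auto simp: th_def du_rl path_edge)
    next
      case R'
      then show ?thesis using R uq pq by (auto simp: th_def du_rr path_edge)
    qed
  qed
qed



lemma iso_th:
  assumes pr: "p \<le> r" and pq: "p < q" and V: "val1 q X p" and XS: "X \<subseteq> {0..<q+r}"
  shows "graph_iso (induced (path_graph (q+r)) X) (induced (disj_union (cycle_graph q) (path_graph r)) (th q p ` X))"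
  unfolding graph_iso_def
proof (intro exI conjI ballI)
  show "bij_betw (th q p) (verts (induced (path_graph (q + r)) X))
     (verts (induced (disj_union (cycle_graph q) (path_graph r)) (th q p ` X)))"
    using inj_on_subset[OF th_inj[of q p], of X] by (simp add: bij_betw_imageI)
  fix u v assume "u \<in> verts (induced (path_graph (q + r)) X)" "v \<in> verts (induced (path_graph (q + r)) X)"
  then have u: "u \<in> X" and v: "v \<in> X" by auto
  show "({u, v} \<in> edges (induced (path_graph (q + r)) X)) =
        ({th q p u, th q p v} \<in> edges (induced (disj_union (cycle_graph q) (path_graph r)) (th q p ` X)))"
    using adj[OF pr pq V XS u v] u v by auto
qed

theorem lemma3p1:
  fixes L :: "'a graph" and k q r :: nat
  assumes "linear_forest L"
    and "card (verts L) = k"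
    and "q \<ge> k + 1"
    and "r + 1 \<ge> k"
  shows "s_count (path_graph (q + r)) L = s_count (disj_union (cycle_graph q) (path_graph r)) L"
proof -
  define G1 where "G1 = path_graph (q + r)"
  define G2 where "G2 = disj_union (cycle_graph q) (path_graph r)"
  define V2 where "V2 = Inl ` {0..<q} \<union> Inr ` {0..<r}"
  define M where "M = min (q - 1) r"
  define A1 where "A1 = {X. X \<subseteq> verts G1 \<and> graph_iso (induced G1 X) L}"
  define A2 where "A2 = {Y. Y \<subseteq> verts G2 \<and> graph_iso (induced G2 Y) L}"
  define p1 where "p1 X = (LEAST p. val1 q X p)" for X
  define p2 where "p2 Y = (LEAST p. val2 q Y p)" for Y
  define Phi where "Phi X = th q (p1 X) ` X" for X
  define Psi where "Psi Y = thi q (p2 Y) ` Y" for Y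
  have vG1: "verts G1 = {0..<q+r}" by (simp add: G1_def verts_path)
  have vG2: "verts G2 = V2" by (simp add: G2_def V2_def verts_du)
  have Mq: "M < q" "M \<le> r" using assms M_def by auto
  have fV2: "finite V2" by (simp add: V2_def)

  have P1: "p1 X \<le> M \<and> val1 q X (p1 X)" if fX: "finite X" and cX: "card X = k" for X
  proof -
    obtain p where p: "p \<le> M" "val1 q X p" using val1_exists[of X k q r] fX cX assms(3,4) M_def by auto
    have "val1 q X (p1 X)" unfolding p1_def by (rule LeastI[of _ p], fact)
    moreover have "p1 X \<le> p" unfolding p1_def by (rule Least_le, fact)
    ultimately show ?thesis using p by simp
  qed

  have A1_prop: "X \<subseteq> {0..<q+r} \<and> finite X \<and> card X = k" if "X \<in> A1" for X
  proof -
    have s: "X \<subseteq> {0..<q+r}" using that vG1 A1_def by auto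
    have "graph_iso (induced G1 X) L" using that A1_def by simp
    then have "card (verts (induced G1 X)) = card (verts L)" by (rule iso_card)
    then have "card X = k" using assms(2) by simp
    moreover have "finite X" using s by (rule finite_subset) simp
    ultimately show ?thesis using s by blast
  qed
  have A2_prop: "Y \<subseteq> V2 \<and> finite Y \<and> card Y = k" if "Y \<in> A2" for Y
  proof -
    have s: "Y \<subseteq> V2" using that vG2 A2_def by auto
    have "graph_iso (induced G2 Y) L" using that A2_def by simp
    then have "card (verts (induced G2 Y)) = card (verts L)" by (rule iso_card)
    then have "card Y = k" using assms(2) by simp
    moreover have "finite Y" using s fV2 by (rule finite_subset)
    ultimately show ?thesis using s by blast
  qed

  have fwd: "Phi X \<in> A2 \<and> Psi (Phi X) = X" if X: "X \<in> A1" for X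
  proof -
    define p0 where "p0 = p1 X"
    have XP: "X \<subseteq> {0..<q+r}" "finite X" "card X = k" using A1_prop X by auto
    have pp: "p0 \<le> M" "val1 q X p0" using P1 XP p0_def by auto
    have p0q: "p0 < q" "p0 \<le> r" using pp Mq by auto
    have "p2 (Phi X) = p0" unfolding p2_def Phi_def p0_def[symmetric]
    proof (rule Least_equality)
      show "val2 q (th q p0 ` X) p0" using val_consistent[of p0 p0 q X] pp p0q by simp
      fix p assume h: "val2 q (th q p0 ` X) p"
      show "p0 \<le> p"
      proof (rule ccontr)
        assume "\<not> p0 \<le> p"
        then have "val1 q X p" using val_consistent[of p p0 q X] h p0q by simp
        then have "p1 X \<le> p" unfolding p1_def by (rule Least_le)
        then show False using \<open>\<not> p0 \<le> p\<close> p0_def by simp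
      qed
    qed
    then have inv: "Psi (Phi X) = X" unfolding Psi_def Phi_def p0_def[symmetric]
      using thi_th_img[OF p0q(1)] by simp
    have sub: "Phi X \<subseteq> verts G2" unfolding Phi_def p0_def[symmetric] vG2 V2_def
      using th_img_sub[OF p0q(2) XP(1)] .
    have "graph_iso (induced G1 X) (induced G2 (Phi X))"
      unfolding G1_def G2_def Phi_def p0_def[symmetric] using iso_th[OF p0q(2) p0q(1) pp(2) XP(1)] .
    then have "graph_iso (induced G2 (Phi X)) L" using X A1_def iso_sym iso_trans by blast
    then show ?thesis using sub inv A2_def by simp
  qed

  have bwd: "Psi Y \<in> A1 \<and> Phi (Psi Y) = Y" if Y: "Y \<in> A2" for Y
  proof -
    have YP: "Y \<subseteq> V2" "finite Y" "card Y = k" using A2_prop Y by auto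
    define X' where "X' = thi q M ` Y"
    have X'1: "th q M ` X' = Y" unfolding X'_def using th_thi_img[OF Mq(1)] YP V2_def by simp
    have X'2: "X' \<subseteq> {0..<q+r}" unfolding X'_def using thi_img_sub[OF Mq] YP V2_def by simp
    have X'3: "finite X'" using X'_def YP by simp
    have "card Y \<le> card X'" using X'1 card_image_le[OF X'3] by metis
    moreover have "card X' \<le> card Y" unfolding X'_def using card_image_le[OF YP(2)] .
    ultimately have "card X' = k" using YP by simp
    then obtain p where p: "p \<le> M" "val1 q X' p" using val1_exists[of X' k q r] X'3 assms M_def by auto
    have "val2 q Y p" using val_consistent[of p M q X'] p Mq X'1 by simp
    then have vp2: "val2 q Y (p2 Y)" "p2 Y \<le> p" unfolding p2_def by (auto intro: LeastI Least_le)
    define p0 where "p0 = p2 Y"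
    have p0q: "p0 < q" "p0 \<le> r" using vp2 p Mq p0_def by auto
    define X where "X = thi q p0 ` Y"
    have X1: "th q p0 ` X = Y" unfolding X_def using th_thi_img[OF p0q(1)] YP V2_def by simp
    have X2: "X \<subseteq> {0..<q+r}" unfolding X_def using thi_img_sub[OF p0q] YP V2_def by simp
    have vX: "val1 q X p0" using val_consistent[of p0 p0 q X] X1 vp2 p0_def p0q by simp
    have "p1 X = p0" unfolding p1_def
    proof (rule Least_equality)
      show "val1 q X p0" by fact
      fix p assume h: "val1 q X p"
      show "p0 \<le> p"
      proof (rule ccontr)
        assume "\<not> p0 \<le> p"
        then have "val2 q Y p" using val_consistent[of p p0 q X] h p0q X1 by simp
        then have "p2 Y \<le> p" unfolding p2_def by (rule Least_le)
        then show False using \<open>\<not> p0 \<le> p\<close> p0_def by simp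
      qed
    qed
    then have inv: "Phi (Psi Y) = Y" unfolding Psi_def Phi_def p0_def[symmetric] X_def[symmetric]
      using X1 by simp
    have "graph_iso (induced G1 X) (induced G2 Y)"
      unfolding G1_def G2_def using iso_th[OF p0q(2) p0q(1) vX X2] X1 by simp
    then have "graph_iso (induced G1 X) L" using Y A2_def iso_trans by blast
    then have "Psi Y \<in> A1" unfolding Psi_def p0_def[symmetric] X_def[symmetric] A1_def using X2 vG1 by simp
    then show ?thesis using inv by simp
  qed

  have "bij_betw Phi A1 A2"
    by (rule bij_betw_byWitness[of A1 Psi]) (use fwd bwd in auto)
  then have "card A1 = card A2" by (rule bij_betw_same_card)
  then show ?thesis unfolding s_count_def A1_def A2_def G1_def G2_def .
qed



end
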